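(* Let $(X,d)$ be a complete metric space and let $u:X\to\mathbb{R}\cup\{+\infty\}$ be a proper, lower semicontinuous function that is bounded from below. Then there is a sequence $\{z_n\}_{n\in\mathbb{N}}\subset X$ such that \[\lim_{n\to\infty}G[u](z_n)=0\quad\text{and}\quad \sum_{n=0}^{\infty}G[u](z_n)\,d(z_n,z_{n+1})<+\infty.\]
   Context: For a function $u:X\to\mathbb{R}\cup\{+\infty\}$ on a metric space $(X,d)$, the global slope is $G[u](x)=\sup_{y\neq x}\frac{(u(x)-u(y))_+}{d(x,y)}$ if $u(x)<+\infty$ and $G[u](x)=+\infty$ otherwise, where $\alpha_+=\max\{\alpha,0\}$. A function is proper if it is not identically $+\infty$. *)

theory Defs
  imports "HOL-Analysis.Analysis"
begin

definition lower_semicontinuous :: "('a::topological_space \<Rightarrow> ereal) \<Rightarrow> bool" where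
  "lower_semicontinuous u \<longleftrightarrow> (\<forall>x. \<forall>t. t < u x \<longrightarrow> (\<forall>\<^sub>F y in at x. t < u y))"

text \<open>The value 0 is inserted so that the sup over a one-point space is 0
  (all quotients are nonnegative, so this changes nothing otherwise).\<close>
definition global_slope :: "('a::metric_space \<Rightarrow> ereal) \<Rightarrow> 'a \<Rightarrow> ereal" where
  "global_slope u x =
     (if u x = \<infinity> then \<infinity>
      else Sup (insert 0 {max 0 (u x - u y) / ereal (dist x y) | y. y \<noteq> x}))"

end

theory Submission
  imports Defs
begin

lemma ekeland_real:
  fixes f :: "'a::complete_space \<Rightarrow> real" and D :: "'a set"
  assumes cl: "\<And>x. x \<in> D \<Longrightarrow> closed {y\<in>D. f y + l * dist x y \<le> f x}"
    and bdd: "bdd_below (f ` D)" and x0: "x0 \<in> D" and l: "l > 0"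
  shows "\<exists>v\<in>D. f v + l * dist x0 v \<le> f x0 \<and> (\<forall>w\<in>D. f v \<le> f w + l * dist v w)"
proof -
  define S where "S x = {y\<in>D. f y + l * dist x y \<le> f x}" for x
  have Srefl: "x \<in> S x" if "x \<in> D" for x using that by (simp add: S_def)
  have Strans: "z \<in> S x" if "y \<in> S x" "z \<in> S y" for x y z
  proof -
    have "dist x z \<le> dist x y + dist y z" by (rule dist_triangle)
    then have "l * dist x z \<le> l * dist x y + l * dist y z" using l
      by (metis distrib_left mult_left_mono less_imp_le)
    then show ?thesis using that by (auto simp: S_def)
  qed
  define e where "e n = l * (1/2)^n" for n :: nat
  have epos: "e n > 0" for n using l by (simp add: e_def)
  have choice: "\<exists>y. y \<in> S x \<and> (\<forall>z\<in>S x. f y \<le> f z + e n)" if "x \<in> D" for x n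
  proof -
    have ne: "f ` S x \<noteq> {}" using Srefl[OF that] by auto
    have bS: "bdd_below (f ` S x)" using bdd by (rule bdd_below_mono) (auto simp: S_def)
    have "Inf (f ` S x) < Inf (f ` S x) + e n" using epos[of n] by simp
    from cInf_lessD[OF ne this] obtain y where y: "y \<in> S x" "f y < Inf (f ` S x) + e n" by auto
    have "\<forall>z\<in>S x. f y \<le> f z + e n"
    proof
      fix z assume "z \<in> S x"
      then have "Inf (f ` S x) \<le> f z" using bS by (simp add: cInf_lower)
      then show "f y \<le> f z + e n" using y by simp
    qed
    with y show ?thesis by blast
  qed
  define nxt where "nxt x n = (SOME y. y \<in> S x \<and> (\<forall>z\<in>S x. f y \<le> f z + e n))" for x n
  define xs where "xs = rec_nat x0 (\<lambda>n x. nxt x n)"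
  have xs0: "xs 0 = x0" and xsS: "xs (Suc n) = nxt (xs n) n" for n by (simp_all add: xs_def)
  have nxt: "nxt x n \<in> S x \<and> (\<forall>z\<in>S x. f (nxt x n) \<le> f z + e n)" if "x \<in> D" for x n
    unfolding nxt_def by (rule someI_ex) (rule choice[OF that])
  have xsD: "xs n \<in> D" for n
  proof (induction n)
    case 0 then show ?case using x0 xs0 by simp
  next
    case (Suc n) then show ?case using nxt[of "xs n" n] xsS[of n] by (auto simp: S_def)
  qed
  have step: "xs (Suc n) \<in> S (xs n)" "\<forall>z\<in>S (xs n). f (xs (Suc n)) \<le> f z + e n" for n
    using nxt[OF xsD[of n], of n] xsS[of n] by auto
  have mono: "xs m \<in> S (xs n)" if "n \<le> m" for m n
    using that
  proof (induction m rule: dec_induct)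
    case base then show ?case using Srefl xsD by auto
  next
    case (step m) then show ?case using Strans \<open>\<And>n. xs (Suc n) \<in> S (xs n)\<close> by blast
  qed
  have small: "l * dist (xs (Suc n)) y \<le> e n" if "y \<in> S (xs (Suc n))" for n y
  proof -
    have "y \<in> S (xs n)" using Strans step(1) that by blast
    then have "f (xs (Suc n)) \<le> f y + e n" using step(2) by blast
    moreover have "f y + l * dist (xs (Suc n)) y \<le> f (xs (Suc n))" using that by (simp add: S_def)
    ultimately show ?thesis by simp
  qed
  have small': "dist (xs (Suc n)) y \<le> (1/2)^n" if "y \<in> S (xs (Suc n))" for n y
    using small[OF that] l by (simp add: e_def)
  have "Cauchy xs"
  proof (unfold Cauchy_def, intro allI impI)
    fix eps :: real assume "eps > 0"
    then obtain N where N: "(1/2::real)^N < eps/2" using real_arch_pow_inv[of "eps/2" "1/2"] by auto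
    show "\<exists>M. \<forall>m\<ge>M. \<forall>n\<ge>M. dist (xs m) (xs n) < eps"
    proof (intro exI allI impI)
      fix m n assume "Suc N \<le> m" "Suc N \<le> n"
      then have "dist (xs (Suc N)) (xs m) \<le> (1/2)^N" "dist (xs (Suc N)) (xs n) \<le> (1/2)^N"
        using small' mono by blast+
      moreover have "dist (xs m) (xs n) \<le> dist (xs (Suc N)) (xs m) + dist (xs (Suc N)) (xs n)"
        by (rule dist_triangle3)
      ultimately show "dist (xs m) (xs n) < eps" using N by linarith
    qed
  qed
  then obtain v where v: "xs \<longlonglongrightarrow> v" using Cauchy_convergent convergent_def by blast
  have vS: "v \<in> S (xs n)" for n
  proof (rule Lim_in_closed_set[OF _ _ _ v])
    show "closed (S (xs n))" unfolding S_def using cl xsD by blast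
    show "\<forall>\<^sub>F x in sequentially. xs x \<in> S (xs n)" using mono by (auto intro: eventually_sequentiallyI)
  qed simp
  have vD: "v \<in> D" using vS[of 0] by (simp add: S_def)
  have first: "f v + l * dist x0 v \<le> f x0" using vS[of 0] xs0 by (simp add: S_def)
  have second: "f v \<le> f w + l * dist v w" if w: "w \<in> D" for w
  proof (rule ccontr)
    assume "\<not> ?thesis"
    then have wS: "w \<in> S v" using w by (simp add: S_def)
    have wSn: "w \<in> S (xs (Suc n))" for n using Strans[OF vS wS] .
    have d: "dist (xs (Suc n)) w \<le> (1/2)^n" for n using small'[OF wSn] .
    have "(\<lambda>n. xs (Suc n)) \<longlonglongrightarrow> w"
    proof (rule tendsto_dist_iff[THEN iffD2], rule tendsto_sandwich[where f="\<lambda>_. 0" and h="\<lambda>n. (1/2::real)^n"])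
      show "\<forall>\<^sub>F n in sequentially. 0 \<le> dist (xs (Suc n)) w" by simp
      show "\<forall>\<^sub>F n in sequentially. dist (xs (Suc n)) w \<le> (1/2)^n" using d by simp
      show "(\<lambda>n. (1/2::real)^n) \<longlonglongrightarrow> 0" by (rule LIMSEQ_realpow_zero) auto
    qed simp
    moreover have "(\<lambda>n. xs (Suc n)) \<longlonglongrightarrow> v" using v by (rule LIMSEQ_Suc)
    ultimately have "w = v" using LIMSEQ_unique by blast
    with \<open>\<not> ?thesis\<close> show False by simp
  qed
  show ?thesis using vD first second by blast
qed

lemma lsc_closed:
  fixes u :: "'a::metric_space \<Rightarrow> ereal"
  assumes lsc: "lower_semicontinuous u" and nm: "\<And>x. u x \<noteq> -\<infinity>" and l: "l > 0"
  shows "closed {y\<in>{x. u x \<noteq> \<infinity>}. real_of_ereal (u y) + l * dist x y \<le> c}"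
  (is "closed ?T")
proof -
  have "\<forall>\<^sub>F z in at y. z \<notin> ?T" if y: "y \<notin> ?T" for y
  proof -
    obtain t :: real where t: "ereal t < u y" "t + l * dist x y > c"
    proof (cases "u y = \<infinity>")
      case True
      show ?thesis by (rule that[of "c - l * dist x y + 1"]) (auto simp: True)
    next
      case False
      then obtain r where r: "u y = ereal r" using nm[of y] by (cases "u y") auto
      with y False have "r + l * dist x y > c" by auto
      then show ?thesis by (intro that[of "(r + (c - l * dist x y))/2"]) (auto simp: r field_simps)
    qed
    define del where "del = t + l * dist x y - c"
    have del: "del > 0" using t by (simp add: del_def)
    have ev1: "\<forall>\<^sub>F z in at y. ereal t < u z" using lsc t(1) unfolding lower_semicontinuous_def by blast
    have ev2: "\<forall>\<^sub>F z in at y. dist z y < del / l" using del l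
      by (auto simp: eventually_at intro!: exI[of _ "del / l"])
    show ?thesis using ev1 ev2
    proof eventually_elim
      case (elim z)
      show "z \<notin> ?T"
      proof
        assume zT: "z \<in> ?T"
        then obtain r where r: "u z = ereal r" using nm[of z] by (cases "u z") auto
        have "t < r" using elim r by simp
        have "dist x y \<le> dist x z + dist z y" by (rule dist_triangle)
        then have "l * dist x y \<le> l * dist x z + l * dist z y" using l
          by (metis distrib_left mult_left_mono less_imp_le)
        moreover have "l * dist z y < del" using elim l by (simp add: field_simps)
        moreover have "r + l * dist x z \<le> c" using zT r by simp
        ultimately show False using \<open>t < r\<close> by (simp add: del_def)
      qed
    qed
  qed
  then show ?thesis unfolding closed_limpt islimpt_iff_eventually by blast
qed

lemma slope_nonneg: "0 \<le> global_slope u v"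
  unfolding global_slope_def by (auto intro: Sup_upper)

lemma slope_le:
  fixes u :: "'a::metric_space \<Rightarrow> ereal"
  assumes nm: "\<And>x. u x \<noteq> -\<infinity>" and fin: "u v \<noteq> \<infinity>" and l: "l \<ge> 0"
    and H: "\<forall>w\<in>{x. u x \<noteq> \<infinity>}. real_of_ereal (u v) \<le> real_of_ereal (u w) + l * dist v w"
  shows "global_slope u v \<le> ereal l"
proof -
  obtain a where a: "u v = ereal a" using nm[of v] fin by (cases "u v") auto
  have "max 0 (u v - u y) / ereal (dist v y) \<le> ereal l" if "y \<noteq> v" for y
  proof (cases "u y = \<infinity>")
    case True then show ?thesis using a l by simp
  next
    case False
    then obtain b where b: "u y = ereal b" using nm[of y] by (cases "u y") auto
    have d: "dist v y > 0" using that by simp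
    have "real_of_ereal (u v) \<le> real_of_ereal (u y) + l * dist v y" using H False by blast
    then have "a \<le> b + l * dist v y" using a b by simp
    then have "max 0 (a - b) / dist v y \<le> l" using d l by (simp add: field_simps)
    moreover have "max 0 (u v - u y) / ereal (dist v y) = ereal (max 0 (a - b) / dist v y)"
      using a b d by (simp add: max_def zero_ereal_def)
    ultimately show ?thesis by simp
  qed
  then show ?thesis using fin l unfolding global_slope_def by (auto intro!: Sup_least)
qed


theorem proposition2p4:
  fixes u :: "'a::complete_space \<Rightarrow> ereal"
  assumes not_minf: "\<And>x. u x \<noteq> -\<infinity>"
    and proper: "\<exists>x. u x \<noteq> \<infinity>"
    and lsc: "lower_semicontinuous u"
    and bdd_below: "\<exists>m::real. \<forall>x. ereal m \<le> u x"
  shows "\<exists>z :: nat \<Rightarrow> 'a.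
           (\<lambda>n. global_slope u (z n)) \<longlonglongrightarrow> 0 \<and>
           (\<Sum>n. global_slope u (z n) * ereal (dist (z n) (z (Suc n)))) < \<infinity>"
proof -
  obtain x0 where x0: "u x0 \<noteq> \<infinity>" using proper by blast
  obtain m :: real where m: "\<And>x. ereal m \<le> u x" using bdd_below by blast
  define D where "D = {x. u x \<noteq> \<infinity>}"
  define f where "f x = real_of_ereal (u x)" for x
  have fm: "m \<le> f x" if "x \<in> D" for x
  proof -
    have ux: "u x \<noteq> \<infinity>" using that by (simp add: D_def)
    obtain r where "u x = ereal r" using ux not_minf[of x] by (cases "u x") auto
    then show ?thesis using m[of x] by (simp add: f_def)
  qed
  have bdd: "bdd_below (f ` D)" unfolding bdd_below_def using fm by blast
  have EK: "\<exists>v\<in>D. f v + l * dist x v \<le> f x \<and> (\<forall>w\<in>D. f v \<le> f w + l * dist v w)"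
    if "x \<in> D" "l > 0" for x l
  proof (rule ekeland_real[OF _ bdd that(1) that(2)])
    fix y assume "y \<in> D"
    show "closed {ya \<in> D. f ya + l * dist y ya \<le> f y}"
      using lsc_closed[OF lsc not_minf that(2), of y "f y"] by (simp add: D_def f_def)
  qed
  define P where "P x l v \<longleftrightarrow> v\<in>D \<and> f v + l * dist x v \<le> f x \<and> (\<forall>w\<in>D. f v \<le> f w + l * dist v w)"
    for x l v
  define ek where "ek x l = (SOME v. P x l v)" for x l
  have ekP: "P x l (ek x l)" if "x \<in> D" "l > 0" for x l
    unfolding ek_def by (rule someI_ex) (use EK[OF that] in \<open>auto simp: P_def\<close>)
  define z where "z = rec_nat (ek x0 1) (\<lambda>n y. ek y ((1/2::real)^Suc n))"
  have z0: "z 0 = ek x0 1" and zS: "z (Suc n) = ek (z n) ((1/2)^Suc n)" for n by (simp_all add: z_def)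
  have x0D: "x0 \<in> D" using x0 by (simp add: D_def)
  have hz0: "P x0 1 (z 0)" using ekP[OF x0D] z0 by simp
  have zD: "z n \<in> D" for n
  proof (induction n)
    case 0 then show ?case using hz0 by (simp add: P_def)
  next
    case (Suc n) then show ?case using ekP[OF Suc, of "(1/2)^Suc n"] zS[of n] by (simp add: P_def)
  qed
  have hzS: "P (z n) ((1/2)^Suc n) (z (Suc n))" for n using ekP[OF zD[of n], of "(1/2)^Suc n"] zS[of n] by simp
  have opt: "\<forall>w\<in>D. f (z n) \<le> f w + (1/2)^n * dist (z n) w" for n
  proof (cases n)
    case 0 then show ?thesis using hz0 by (simp add: P_def)
  next
    case (Suc k) then show ?thesis using hzS[of k] by (simp add: P_def)
  qed
  have desc: "f (z (Suc n)) + (1/2)^Suc n * dist (z n) (z (Suc n)) \<le> f (z n)" for n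
    using hzS[of n] by (simp add: P_def)
  have Gle: "global_slope u (z n) \<le> ereal ((1/2)^n)" for n
    using slope_le[OF not_minf, where v="z n" and l="(1/2)^n"] zD[of n] opt[of n] by (simp add: D_def f_def)
  define g where "g n = real_of_ereal (global_slope u (z n))" for n
  have Gg: "global_slope u (z n) = ereal (g n)" and g0: "0 \<le> g n" and g1: "g n \<le> (1/2)^n" for n
  proof -
    have a: "0 \<le> global_slope u (z n)" by (rule slope_nonneg)
    obtain r where r: "global_slope u (z n) = ereal r" using a Gle[of n]
      by (cases "global_slope u (z n)") auto
    show "global_slope u (z n) = ereal (g n)" using r by (simp add: g_def)
    show "0 \<le> g n" using a r by (simp add: g_def)
    show "g n \<le> (1/2)^n" using Gle[of n] r by (simp add: g_def)
  qed
  have glim: "g \<longlonglongrightarrow> 0"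
  proof (rule tendsto_sandwich[where f="\<lambda>_. 0" and h="\<lambda>n. (1/2::real)^n"])
    show "\<forall>\<^sub>F n in sequentially. 0 \<le> g n" using g0 by simp
    show "\<forall>\<^sub>F n in sequentially. g n \<le> (1/2)^n" using g1 by simp
    show "(\<lambda>n. (1/2::real)^n) \<longlonglongrightarrow> 0" by (rule LIMSEQ_realpow_zero) auto
  qed simp
  have lim: "(\<lambda>n. global_slope u (z n)) \<longlonglongrightarrow> 0"
    using tendsto_ereal[OF glim] by (simp add: Gg zero_ereal_def)
  define b where "b n = 2 * (f (z n) - f (z (Suc n)))" for n
  have tb: "g n * dist (z n) (z (Suc n)) \<le> b n" and b0: "0 \<le> b n" for n
  proof -
    have "g n * dist (z n) (z (Suc n)) \<le> (1/2)^n * dist (z n) (z (Suc n))"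
      using g1[of n] by (simp add: mult_right_mono)
    also have "\<dots> = 2 * ((1/2)^Suc n * dist (z n) (z (Suc n)))" by simp
    also have "\<dots> \<le> b n" using desc[of n] by (simp add: b_def)
    finally show "g n * dist (z n) (z (Suc n)) \<le> b n" .
    define q where "q = (1/2::real)^Suc n * dist (z n) (z (Suc n))"
    have "0 \<le> q" by (simp add: q_def)
    moreover have "f (z (Suc n)) + q \<le> f (z n)" using desc[of n] by (simp add: q_def)
    ultimately show "0 \<le> b n" unfolding b_def using [[show_types]] by simp
  qed
  have "summable b"
  proof (rule summableI_nonneg_bounded[where x="2 * (f (z 0) - m)"])
    show "0 \<le> b n" for n by (rule b0)
    show "sum b {..<n} \<le> 2 * (f (z 0) - m)" for n
    proof -
      have "sum b {..<n} = 2 * (\<Sum>k<n. f (z k) - f (z (Suc k)))" by (simp add: b_def sum_distrib_left)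
      also have "(\<Sum>k<n. f (z k) - f (z (Suc k))) = f (z 0) - f (z n)"
        using sum_lessThan_telescope'[of "\<lambda>k. f (z k)" n] by simp
      finally show ?thesis using fm[OF zD[of n]] by simp
    qed
  qed
  then have sm: "summable (\<lambda>n. g n * dist (z n) (z (Suc n)))"
    by (rule summable_comparison_test[rotated]) (use tb g0 in \<open>auto\<close>)
  have "(\<Sum>n. global_slope u (z n) * ereal (dist (z n) (z (Suc n))))
        = (\<Sum>n. ereal (g n * dist (z n) (z (Suc n))))" by (simp add: Gg)
  also have "\<dots> = ereal (\<Sum>n. g n * dist (z n) (z (Suc n)))" by (rule suminf_ereal'[OF sm])
  finally have "(\<Sum>n. global_slope u (z n) * ereal (dist (z n) (z (Suc n)))) < \<infinity>" by simp
  with lim show ?thesis by blast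
qed

end
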